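(* Let $d,n\ge1$, let ${\mathbb X}\subseteq{\mathbb P}^2$ be a set of $\binom{d+1}{2}$ points in generic position, and let ${\bf L}=(L_{lj})$ be a $d\times(d+1)$ matrix of linear forms in $\mathfrak{k}[w_1,w_2,w_3]$ whose signed maximal minors generate $I_{\mathbb X}$. Write $L_{lj}=\sum_{k=1}^3\lambda_{ljk}w_k$ with $\lambda_{ljk}\in\mathfrak{k}$. Let ${\bf E}$ be the $\binom{n+1}{2}d\times\binom{n+2}{2}(d+1)$ matrix whose rows are indexed by pairs $(\beta,l)$ with $\beta\in{\mathbb N}^3$, $|\beta|=n-1$, $1\le l\le d$, whose columns are indexed by pairs $(\alpha,j)$ with $\alpha\in{\mathbb N}^3$, $|\alpha|=n$, $1\le j\le d+1$, and whose $((\beta,l),(\alpha,j))$ entry is $\lambda_{ljk}$ if $w^\alpha=w^\beta w_k$ for some $k\in\{1,2,3\}$ and $0$ otherwise. Then ${\bf E}$ has maximal rank, i.e. rank $\binom{n+1}{2}d$.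
   Context: $\mathfrak{k}$ is algebraically closed of characteristic $0$; $w^\alpha=w_1^{\alpha_1}w_2^{\alpha_2}w_3^{\alpha_3}$ and $|\alpha|=\alpha_1+\alpha_2+\alpha_3$. $I_{\mathbb X}\subseteq\mathfrak{k}[w_1,w_2,w_3]$ is the homogeneous ideal of ${\mathbb X}$. "Generic position" means $\dim_{\mathfrak{k}}(\mathfrak{k}[w_1,w_2,w_3]/I_{\mathbb X})_s=\min\{\binom{s+2}{2},|{\mathbb X}|\}$ for all $s$; for such ${\mathbb X}$, $I_{\mathbb X}$ is generated by the maximal minors $F_j=(-1)^{j+1}\det({\bf L}\setminus j\text{-th column})$ of such a $d\times(d+1)$ matrix ${\bf L}$ of linear forms. *)

theory Defs
  imports "HOL-Library.Poly_Mapping" "HOL-Library.Product_Plus" "HOL-Library.Function_Algebras"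
          "HOL-Combinatorics.Permutations" "HOL-Computational_Algebra.Polynomial"
begin

text \<open>Polynomials in k[w1,w2,w3]: finitely supported maps from exponent triples
  (a1,a2,a3) (standing for w1^a1 w2^a2 w3^a3) to coefficients.\<close>
type_synonym 'k poly3 = "(nat \<times> nat \<times> nat) \<Rightarrow>\<^sub>0 'k"

definition deg3 :: "nat \<times> nat \<times> nat \<Rightarrow> nat" where
  "deg3 a = fst a + fst (snd a) + snd (snd a)"

definition evar :: "nat \<Rightarrow> nat \<times> nat \<times> nat" where
  "evar k = (if k = 1 then (1,0,0) else if k = 2 then (0,1,0) else (0,0,1))"

definition var3 :: "nat \<Rightarrow> 'k::{zero,one} poly3" where
  "var3 k = Poly_Mapping.single (evar k) 1"

definition pscale :: "'k::comm_ring_1 \<Rightarrow> 'k poly3 \<Rightarrow> 'k poly3" where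
  "pscale c f = Poly_Mapping.map (\<lambda>x. c * x) f"

definition mono_eval :: "nat \<times> nat \<times> nat \<Rightarrow> 'k::comm_ring_1 \<times> 'k \<times> 'k \<Rightarrow> 'k" where
  "mono_eval a p = fst p ^ fst a * fst (snd p) ^ fst (snd a) * snd (snd p) ^ snd (snd a)"

definition hcomp_eval :: "nat \<Rightarrow> 'k::comm_ring_1 poly3 \<Rightarrow> 'k \<times> 'k \<times> 'k \<Rightarrow> 'k" where
  "hcomp_eval s f p = (\<Sum>a \<in> {a \<in> Poly_Mapping.keys f. deg3 a = s}. Poly_Mapping.lookup f a * mono_eval a p)"

definition forms :: "nat \<Rightarrow> 'k::zero poly3 set" where
  "forms s = {f. \<forall>a \<in> Poly_Mapping.keys f. deg3 a = s}"

text \<open>Points of P^2 are given by nonzero representatives, pairwise non-proportional.\<close>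
definition proj_points :: "('k::field \<times> 'k \<times> 'k) set \<Rightarrow> bool" where
  "proj_points X \<longleftrightarrow> finite X \<and> (0,0,0) \<notin> X \<and>
     (\<forall>p\<in>X. \<forall>q\<in>X. p \<noteq> q \<longrightarrow> \<not> (\<exists>c. p = (c * fst q, c * fst (snd q), c * snd (snd q))))"

definition ideal_of_points :: "('k::field \<times> 'k \<times> 'k) set \<Rightarrow> 'k poly3 set" where
  "ideal_of_points X = {f. \<forall>s. \<forall>p\<in>X. hcomp_eval s f p = 0}"

definition generic_position :: "('k::field \<times> 'k \<times> 'k) set \<Rightarrow> bool" where
  "generic_position X \<longleftrightarrow> (\<forall>s.
     vector_space.dim pscale (forms s :: 'k poly3 set)
       - vector_space.dim pscale (ideal_of_points X \<inter> forms s)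
     = min ((s + 2) choose 2) (card X))"

definition detm :: "nat \<Rightarrow> (nat \<Rightarrow> nat \<Rightarrow> 'a::comm_ring_1) \<Rightarrow> 'a" where
  "detm m M = (\<Sum>\<sigma> | \<sigma> permutes {1..m}. of_int (sign \<sigma>) * (\<Prod>i=1..m. M i (\<sigma> i)))"

definition skip :: "nat \<Rightarrow> nat \<Rightarrow> nat" where
  "skip j i = (if i < j then i else i + 1)"

definition signed_minor :: "nat \<Rightarrow> (nat \<Rightarrow> nat \<Rightarrow> 'a::comm_ring_1) \<Rightarrow> nat \<Rightarrow> 'a" where
  "signed_minor d L j = (-1) ^ (j + 1) * detm d (\<lambda>l i. L l (skip j i))"

definition ideal_gen :: "nat \<Rightarrow> (nat \<Rightarrow> 'a::comm_ring_1) \<Rightarrow> 'a set" where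
  "ideal_gen r F = {f. \<exists>g. f = (\<Sum>j=1..r. g j * F j)}"

definition linmat :: "(nat \<Rightarrow> nat \<Rightarrow> nat \<Rightarrow> 'k::comm_ring_1) \<Rightarrow> nat \<Rightarrow> nat \<Rightarrow> 'k poly3" where
  "linmat lam l j = (\<Sum>k=1..3. pscale (lam l j k) (var3 k))"

definition mat_rank :: "'r set \<Rightarrow> 'c set \<Rightarrow> ('r \<Rightarrow> 'c \<Rightarrow> 'k::field) \<Rightarrow> nat" where
  "mat_rank R C M = vector_space.dim (\<lambda>c v x. c * v x)
      ((\<lambda>r. (\<lambda>x. if x \<in> C then M r x else 0)) ` R)"

definition Erows :: "nat \<Rightarrow> nat \<Rightarrow> ((nat \<times> nat \<times> nat) \<times> nat) set" where
  "Erows n d = {(b, l). deg3 b = n - 1 \<and> 1 \<le> l \<and> l \<le> d}"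

definition Ecols :: "nat \<Rightarrow> nat \<Rightarrow> ((nat \<times> nat \<times> nat) \<times> nat) set" where
  "Ecols n d = {(a, j). deg3 a = n \<and> 1 \<le> j \<and> j \<le> d + 1}"

definition Emat :: "(nat \<Rightarrow> nat \<Rightarrow> nat \<Rightarrow> 'k::field)
    \<Rightarrow> (nat \<times> nat \<times> nat) \<times> nat \<Rightarrow> (nat \<times> nat \<times> nat) \<times> nat \<Rightarrow> 'k" where
  "Emat lam r c = (case r of (b, l) \<Rightarrow> case c of (a, j) \<Rightarrow>
     (if \<exists>k\<in>{1,2,3}. a = b + evar k then lam l j (THE k. k \<in> {1,2,3} \<and> a = b + evar k) else 0))"

end

theory Submission
  imports Defs "HOL-Library.Product_Lexorder"
begin


instance prod :: ("{ordered_cancel_comm_monoid_add, linorder}", "{ordered_cancel_comm_monoid_add, linorder}") ordered_cancel_comm_monoid_add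
proof
  fix a b c :: "'a \<times> 'b"
  assume "a \<le> b"
  then show "c + a \<le> c + b"
    by (cases a; cases b; cases c) (auto simp: add_strict_left_mono add_left_mono)
qed

definition ev :: "'k::comm_ring_1 \<times> 'k \<times> 'k \<Rightarrow> 'k poly3 \<Rightarrow> 'k" where
  "ev p f = (\<Sum>a\<in>Poly_Mapping.keys f. Poly_Mapping.lookup f a * mono_eval a p)"

lemma ev_superset:
  assumes "finite A" "Poly_Mapping.keys f \<subseteq> A"
  shows "ev p f = (\<Sum>a\<in>A. Poly_Mapping.lookup f a * mono_eval a p)"
  unfolding ev_def using assms
  by (intro sum.mono_neutral_left) (auto simp: in_keys_iff)

lemma ev_add: "ev p (f + g) = ev p f + ev p g"
proof -
  let ?A = "Poly_Mapping.keys f \<union> Poly_Mapping.keys g"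
  have "ev p (f + g) = (\<Sum>a\<in>?A. Poly_Mapping.lookup (f + g) a * mono_eval a p)"
    by (rule ev_superset) (auto simp: keys_add)
  also have "\<dots> = (\<Sum>a\<in>?A. Poly_Mapping.lookup f a * mono_eval a p) + (\<Sum>a\<in>?A. Poly_Mapping.lookup g a * mono_eval a p)"
    by (simp add: lookup_add distrib_right sum.distrib)
  also have "\<dots> = ev p f + ev p g"
    by (subst (1 2) ev_superset[of ?A]) auto
  finally show ?thesis .
qed

lemma ev_zero: "ev p 0 = 0"
  by (simp add: ev_def)

lemma ev_sum: "ev p (\<Sum>i\<in>I. F i) = (\<Sum>i\<in>I. ev p (F i))"
  by (induction I rule: infinite_finite_induct) (auto simp: ev_zero ev_add)

lemma ev_single: "ev p (Poly_Mapping.single a c) = c * mono_eval a p"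
  by (subst ev_superset[of "{a}"]) auto

lemma mono_eval_add: "mono_eval (a + b) p = mono_eval a p * mono_eval b p"
  by (cases a; cases b; cases p) (simp add: mono_eval_def power_add algebra_simps)

lemma mono_eval_zero: "mono_eval 0 p = 1"
  by (simp add: mono_eval_def)

lemma poly_expand: "f = (\<Sum>a\<in>Poly_Mapping.keys f. Poly_Mapping.single a (Poly_Mapping.lookup f a))"
  by (rule poly_mapping_eqI) (auto simp: lookup_sum lookup_single when_def in_keys_iff)

lemma ev_mult: "ev p (f * g) = ev p f * ev p g"
proof -
  have "f * g = (\<Sum>a\<in>Poly_Mapping.keys f. Poly_Mapping.single a (Poly_Mapping.lookup f a)) *
      (\<Sum>b\<in>Poly_Mapping.keys g. Poly_Mapping.single b (Poly_Mapping.lookup g b))"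
    using poly_expand[of f] poly_expand[of g] by simp
  also have "\<dots> = (\<Sum>a\<in>Poly_Mapping.keys f. \<Sum>b\<in>Poly_Mapping.keys g.
      Poly_Mapping.single (a + b) (Poly_Mapping.lookup f a * Poly_Mapping.lookup g b))"
    by (simp add: sum_product mult_single)
  finally have "ev p (f * g) = (\<Sum>a\<in>Poly_Mapping.keys f. \<Sum>b\<in>Poly_Mapping.keys g.
      (Poly_Mapping.lookup f a * mono_eval a p) * (Poly_Mapping.lookup g b * mono_eval b p))"
    by (simp add: ev_sum ev_single mono_eval_add algebra_simps)
  also have "\<dots> = ev p f * ev p g"
    by (simp add: ev_def sum_product)
  finally show ?thesis .
qed

lemma deg3_add: "deg3 (a + b) = deg3 a + deg3 b"
  by (cases a; cases b) (simp add: deg3_def)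

lemma forms_mult: "f \<in> forms s \<Longrightarrow> g \<in> forms t \<Longrightarrow> f * g \<in> forms (s + t)"
  unfolding forms_def
proof (clarify)
  fix a assume f: "\<forall>a\<in>Poly_Mapping.keys f. deg3 a = s" and g: "\<forall>a\<in>Poly_Mapping.keys g. deg3 a = t"
    and a: "a \<in> Poly_Mapping.keys (f * g)"
  then obtain b c where "a = b + c" "b \<in> Poly_Mapping.keys f" "c \<in> Poly_Mapping.keys g"
    using keys_mult[of f g] by blast
  then show "deg3 a = s + t" using f g by (simp add: deg3_add)
qed

lemma hcomp_forms: "f \<in> forms s \<Longrightarrow> hcomp_eval t f p = (if t = s then ev p f else 0)"
proof -
  assume "f \<in> forms s"
  then have "{a \<in> Poly_Mapping.keys f. deg3 a = t} = (if t = s then Poly_Mapping.keys f else {})"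
    unfolding forms_def by auto
  then show ?thesis unfolding hcomp_eval_def ev_def by simp
qed

lemma one_forms: "1 \<in> forms 0"
  unfolding forms_def by (simp add: single_one[symmetric] del: single_one) (simp add: deg3_def)

definition lform :: "'k::field \<times> 'k \<times> 'k \<Rightarrow> 'k poly3" where
  "lform p = (if fst p \<noteq> 0 then Poly_Mapping.single (0,1,0) (fst p) + Poly_Mapping.single (1,0,0) (- fst (snd p))
     else Poly_Mapping.single (1,0,0) 1)"

lemma lform_forms: "lform p \<in> forms 1"
  unfolding lform_def forms_def using keys_add
  by (auto simp: deg3_def split: if_splits dest!: subsetD[OF keys_add])

lemma lform_ev: "ev p (lform p) = 0"
  by (cases p) (auto simp: lform_def ev_add ev_single mono_eval_def)

lemma lform_nz: "lform p \<noteq> 0"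
proof
  assume "lform p = 0"
  then have "Poly_Mapping.lookup (lform p) (0,1,0) = 0" "Poly_Mapping.lookup (lform p) (1,0,0) = 0" by simp_all
  then show False by (auto simp: lform_def lookup_add lookup_single split: if_splits)
qed

lemma ev_one: "ev p 1 = 1"
  using ev_single[of p 0 1] by (simp add: mono_eval_zero)

lemma ev_prod: "ev p (\<Prod>i\<in>I. F i) = (\<Prod>i\<in>I. ev p (F i))"
  by (induction I rule: infinite_finite_induct) (auto simp: ev_one ev_mult)

lemma forms_prod: "\<exists>s. (\<Prod>i\<in>I. lform (F i)) \<in> forms s"
proof (induction I rule: infinite_finite_induct)
  case (insert x I)
  then obtain s where "(\<Prod>i\<in>I. lform (F i)) \<in> forms s" by auto
  then have "lform (F x) * (\<Prod>i\<in>I. lform (F i)) \<in> forms (1 + s)" by (rule forms_mult[OF lform_forms])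
  then show ?case using insert by auto
qed (use one_forms in auto)

lemma nonzero_in_ideal:
  fixes X :: "('k::field \<times> 'k \<times> 'k) set"
  assumes "finite X"
  shows "\<exists>f. f \<in> ideal_of_points X \<and> f \<noteq> 0"
proof -
  let ?f = "\<Prod>p\<in>X. lform p"
  obtain s where s: "?f \<in> forms s" using forms_prod[of "\<lambda>p. p" X] by auto
  have "?f \<noteq> 0" using assms lform_nz by auto
  moreover have "?f \<in> ideal_of_points X"
    unfolding ideal_of_points_def
  proof (clarify)
    fix t q assume "q \<in> X"
    have "ev q ?f = 0" unfolding ev_prod using assms \<open>q \<in> X\<close> lform_ev[of q]
      by (intro prod_zero) blast+
    then show "hcomp_eval t ?f q = 0" using hcomp_forms[OF s] by simp
  qed
  ultimately show ?thesis by blast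
qed

lemma detm_eq_rows:
  fixes M :: "nat \<Rightarrow> nat \<Rightarrow> 'a::comm_ring_1"
  assumes two: "\<And>x::'a. x + x = 0 \<Longrightarrow> x = 0"
    and ab: "a \<in> {1..d}" "b \<in> {1..d}" "a \<noteq> b" and eq: "M a = M b"
  shows "detm d M = 0"
proof -
  let ?t = "Transposition.transpose a b"
  let ?P = "{\<sigma>. \<sigma> permutes {1..d}}"
  let ?f = "\<lambda>\<sigma>. of_int (sign \<sigma>) * (\<Prod>i=1..d. M i (\<sigma> i)) :: 'a"
  have tp: "?t permutes {1..d}" by (intro permutes_swap_id ab(1) ab(2))
  have Mt: "M (?t i) = M i" for i using eq by (cases "i = a"; cases "i = b") auto
  have neg: "?f (\<sigma> \<circ> ?t) = - ?f \<sigma>" if s: "\<sigma> permutes {1..d}" for \<sigma>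
  proof -
    have "sign (\<sigma> \<circ> ?t) = - sign \<sigma>"
      using sign_compose[OF permutes_imp_permutation[OF _ s] permutation_swap_id] ab
      by (simp add: sign_swap_id)
    moreover have "(\<Prod>i=1..d. M i ((\<sigma> \<circ> ?t) i)) = (\<Prod>i=1..d. M i (\<sigma> i))"
    proof -
      have "(\<Prod>i=1..d. M i (\<sigma> i)) = (\<Prod>i=1..d. M (?t i) (\<sigma> i))" by (simp add: Mt)
      also have "\<dots> = (\<Prod>i\<in>?t ` {1..d}. M (?t i) (\<sigma> i))"
        using permutes_image[OF tp] by simp
      also have "\<dots> = (\<Prod>i=1..d. M (?t (?t i)) (\<sigma> (?t i)))"
        by (subst prod.reindex) (auto intro: permutes_inj_on[OF tp])
      finally show ?thesis by simp
    qed
    ultimately show ?thesis by simp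
  qed
  have "detm d M = (\<Sum>\<sigma>\<in>?P. ?f \<sigma>)" unfolding detm_def by simp
  also have "\<dots> = (\<Sum>\<sigma>\<in>?P. ?f (\<sigma> \<circ> ?t))"
    by (rule sum.reindex_bij_witness[where i="\<lambda>\<sigma>. \<sigma> \<circ> ?t" and j="\<lambda>\<sigma>. \<sigma> \<circ> ?t"])
       (auto simp: o_assoc[symmetric] simp del: One_nat_def intro: permutes_compose[OF tp])
  also have "\<dots> = (\<Sum>\<sigma>\<in>?P. - ?f \<sigma>)" by (intro sum.cong refl neg) simp
  also have "\<dots> = - (\<Sum>\<sigma>\<in>?P. ?f \<sigma>)" by (simp add: sum_negf)
  finally have "detm d M = - detm d M" by (simp add: detm_def)
  then have "detm d M + detm d M = 0" by (metis add.right_inverse)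
  then show ?thesis by (rule two)
qed

lemma detm_row_lin:
  fixes M :: "nat \<Rightarrow> nat \<Rightarrow> 'a::comm_ring_1"
  assumes r: "r \<in> {1..d}"
  shows "detm d (M(r := (\<lambda>i. \<Sum>l\<in>L. g l * M l i))) = (\<Sum>l\<in>L. g l * detm d (M(r := M l)))"
proof -
  have row: "(\<Prod>i=1..d. (N(r := R)) i (\<sigma> i)) = R (\<sigma> r) * (\<Prod>i\<in>{1..d}-{r}. N i (\<sigma> i))" for N R and \<sigma> :: "nat \<Rightarrow> nat"
    using r by (subst prod.remove[of _ r]) (auto intro!: prod.cong)
  show ?thesis
    unfolding detm_def row
    by (simp add: sum_distrib_left sum_distrib_right sum.swap[of _ L] algebra_simps)
qed

lemma detm_zero_row:
  fixes M :: "nat \<Rightarrow> nat \<Rightarrow> 'a::comm_ring_1"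
  assumes r: "r \<in> {1..d}" and z: "\<And>i. i \<in> {1..d} \<Longrightarrow> M r i = 0"
  shows "detm d M = 0"
  unfolding detm_def
proof (intro sum.neutral ballI)
  fix \<sigma> assume "\<sigma> \<in> {\<sigma>. \<sigma> permutes {1..d}}"
  then have s: "\<sigma> permutes {1..d}" by simp
  have "\<sigma> r \<in> {1..d}" using r permutes_in_image[OF s] by simp
  then have "(\<Prod>i = 1..d. M i (\<sigma> i)) = 0"
    using r z by (intro prod_zero) (auto intro!: bexI[of _ r])
  then show "of_int (sign \<sigma>) * (\<Prod>i = 1..d. M i (\<sigma> i)) = 0" by simp
qed

lemma detm_combo:
  fixes M :: "nat \<Rightarrow> nat \<Rightarrow> 'a::comm_ring_1"
  assumes two: "\<And>x::'a. x + x = 0 \<Longrightarrow> x = 0"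
    and r: "r \<in> {1..d}" and zero: "\<And>i. i \<in> {1..d} \<Longrightarrow> (\<Sum>l=1..d. g l * M l i) = 0"
  shows "g r * detm d M = 0"
proof -
  have "0 = detm d (M(r := (\<lambda>i. \<Sum>l=1..d. g l * M l i)))"
    by (rule detm_zero_row[OF r, symmetric]) (use zero in auto)
  also have "\<dots> = (\<Sum>l=1..d. g l * detm d (M(r := M l)))" by (rule detm_row_lin[OF r])
  also have "\<dots> = g r * detm d (M(r := M r))"
  proof -
    have "(\<Sum>l\<in>{1..d}-{r}. g l * detm d (M(r := M l))) = 0"
    proof (intro sum.neutral ballI)
      fix l assume l: "l \<in> {1..d}-{r}"
      show "g l * detm d (M(r := M l)) = 0"
        using detm_eq_rows[OF two r, of l "M(r := M l)"] l by auto
    qed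
    then show ?thesis using r by (subst sum.remove[of _ r]) auto
  qed
  also have "\<dots> = g r * detm d M" by simp
  finally show ?thesis by simp
qed




lemma sum_fun_apply': "(\<Sum>a\<in>A. F a) x = (\<Sum>a\<in>A. F a x)"
  by (induction A rule: infinite_finite_induct) auto

lemma card_tri: "card {(i::nat, j::nat). i + j \<le> m} = (m + 2) choose 2"
proof (induction m)
  case 0
  have "{(i::nat, j::nat). i + j \<le> 0} = {(0,0)}" by auto
  then show ?case by (simp add: numeral_2_eq_2)
next
  case (Suc m)
  have eq: "{(i::nat, j::nat). i + j \<le> Suc m} = {(i, j). i + j \<le> m} \<union> (\<lambda>i. (i, Suc m - i)) ` {0..Suc m}"
  proof (intro equalityI subsetI)
    fix x assume "x \<in> {(i::nat, j::nat). i + j \<le> Suc m}"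
    then obtain i j where x: "x = (i, j)" "i + j \<le> Suc m" by auto
    show "x \<in> {(i::nat, j::nat). i + j \<le> m} \<union> (\<lambda>i. (i, Suc m - i)) ` {0..Suc m}"
    proof (cases "i + j \<le> m")
      case False
      then have "j = Suc m - i" "i \<in> {0..Suc m}" using x by auto
      then show ?thesis using x by blast
    qed (use x in auto)
  qed auto
  have fin: "finite {(i::nat, j::nat). i + j \<le> m}"
    by (rule finite_subset[of _ "{0..m} \<times> {0..m}"]) auto
  have "card ((\<lambda>i. (i, Suc m - i)) ` {0..Suc m}) = Suc (Suc m)"
    by (subst card_image) (auto simp: inj_on_def)
  moreover have "{(i::nat, j::nat). i + j \<le> m} \<inter> (\<lambda>i. (i, Suc m - i)) ` {0..Suc m} = {}" by auto
  ultimately have "card {(i::nat, j::nat). i + j \<le> Suc m} = ((m + 2) choose 2) + Suc (Suc m)"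
    unfolding eq using fin Suc by (subst card_Un_disjoint) auto
  also have "\<dots> = (Suc m + 2) choose 2"
    by (simp add: numeral_2_eq_2)
  finally show ?case .
qed

lemma fin_tri: "finite {(i::nat, j::nat). i + j \<le> m}"
  by (rule finite_subset[of _ "{0..m} \<times> {0..m}"]) auto

lemma deg3_eq: "{b. deg3 b = m} = (\<lambda>(i, j). (i, j, m - i - j)) ` {(i::nat, j::nat). i + j \<le> m}"
proof (intro equalityI subsetI)
  fix b assume "b \<in> {b. deg3 b = m}"
  then obtain x y z where b: "b = (x, y, z)" "x + y + z = m" by (cases b) (auto simp: deg3_def)
  then have "b = (\<lambda>(i, j). (i, j, m - i - j)) (x, y)" "(x, y) \<in> {(i::nat, j::nat). i + j \<le> m}" by auto
  then show "b \<in> (\<lambda>(i, j). (i, j, m - i - j)) ` {(i::nat, j::nat). i + j \<le> m}" by blast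
next
  fix b assume "b \<in> (\<lambda>(i, j). (i, j, m - i - j)) ` {(i::nat, j::nat). i + j \<le> m}"
  then obtain i j where "i + j \<le> m" "b = (i, j, m - i - j)" by auto
  then show "b \<in> {b. deg3 b = m}" by (simp add: deg3_def)
qed

lemma finite_deg3: "finite {b. deg3 b = m}"
  unfolding deg3_eq using fin_tri by simp

lemma card_deg3: "card {b. deg3 b = m} = (m + 2) choose 2"
  unfolding deg3_eq card_tri[symmetric]
  by (rule card_image) (auto simp: inj_on_def)



lemma poly3_two:
  fixes x :: "'k::field_char_0 poly3"
  assumes "x + x = 0" shows "x = 0"
proof (rule poly_mapping_eqI)
  fix a
  have "Poly_Mapping.lookup x a + Poly_Mapping.lookup x a = Poly_Mapping.lookup (x + x) a"
    by (rule lookup_add[symmetric])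
  also have "\<dots> = 0" unfolding assms by simp
  finally have "Poly_Mapping.lookup x a + Poly_Mapping.lookup x a = 0" .
  then have "2 * Poly_Mapping.lookup x a = 0" by (simp only: mult_2)
  then show "Poly_Mapping.lookup x a = Poly_Mapping.lookup 0 a" by simp
qed

lemma linmat_eq: "linmat lam l j = (\<Sum>k=1..3. Poly_Mapping.single (evar k) (lam l j k))"
  unfolding linmat_def pscale_def var3_def by simp

lemma evar_inj: "k \<in> {1,2,3} \<Longrightarrow> k' \<in> {1,2,3} \<Longrightarrow> b + evar k = b + evar k' \<Longrightarrow> k = k'"
  by (cases b) (auto simp: evar_def split: if_splits)

lemma deg3_evar: "k \<in> {1,2,3} \<Longrightarrow> deg3 (b + evar k) = deg3 b + 1"
  by (auto simp: deg3_add evar_def deg3_def)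

lemma Emat_sum:
  "(\<Sum>k=1..3. if b + evar k = a then c * lam l j k else 0) = c * Emat lam (b, l) (a, j)"
proof (cases "\<exists>k\<in>{1,2,3}. a = b + evar k")
  case True
  then obtain k0 where k0: "k0 \<in> {1,2,3}" "a = b + evar k0" by blast
  have the: "(THE k. k \<in> {1,2,3} \<and> a = b + evar k) = k0"
  proof (rule the_equality)
    show "k0 \<in> {1,2,3} \<and> a = b + evar k0" using k0 by simp
    fix k assume "k \<in> {1,2,3} \<and> a = b + evar k"
    then have kk: "k \<in> {1,2,3}" "b + evar k = b + evar k0" using k0(2) by auto
    show "k = k0" by (rule evar_inj[OF kk(1) k0(1) kk(2)])
  qed
  have "(\<Sum>k=1..3. if b + evar k = a then c * lam l j k else 0) = (\<Sum>k\<in>{1..3}. if k = k0 then c * lam l j k else 0)"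
  proof (intro sum.cong refl)
    fix k assume "k \<in> {1..3::nat}"
    then have k: "k \<in> {1,2,3}" by auto
    have "(b + evar k = a) = (k = k0)"
    proof
      assume "b + evar k = a"
      then have "b + evar k = b + evar k0" using k0(2) by simp
      then show "k = k0" by (rule evar_inj[OF k k0(1)])
    qed (use k0(2) in simp)
    then show "(if b + evar k = a then c * lam l j k else 0) = (if k = k0 then c * lam l j k else 0)" by simp
  qed
  also have "\<dots> = c * lam l j k0"
  proof -
    have "k0 \<in> {1..3}" using k0(1) by auto
    then show ?thesis by (simp add: sum.delta)
  qed
  finally show ?thesis using True the by (simp add: Emat_def)
next
  case False
  then have "(\<Sum>k=1..3. if b + evar k = a then c * lam l j k else 0) = 0"
  proof (intro sum.neutral ballI)
    fix k assume "k \<in> {1..3::nat}"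
    then have k: "k \<in> {1,2,3}" by auto
    then show "(if b + evar k = a then c * lam l j k else 0) = 0" using False by auto
  qed
  then show ?thesis using False by (simp add: Emat_def)
qed

lemma g_lin_lookup:
  fixes c :: "(nat \<times> nat \<times> nat) \<times> nat \<Rightarrow> 'k::field"
  assumes finD: "finite D"
  shows "Poly_Mapping.lookup (\<Sum>l\<in>L. (\<Sum>\<beta>\<in>D. Poly_Mapping.single \<beta> (c (\<beta>, l))) * linmat lam l j) a
     = (\<Sum>l\<in>L. \<Sum>\<beta>\<in>D. c (\<beta>, l) * Emat lam (\<beta>, l) (a, j))"
proof -
  have "(\<Sum>\<beta>\<in>D. Poly_Mapping.single \<beta> (c (\<beta>, l))) * linmat lam l j =
     (\<Sum>\<beta>\<in>D. \<Sum>k=1..3. Poly_Mapping.single (\<beta> + evar k) (c (\<beta>, l) * lam l j k))" for l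
    unfolding linmat_eq by (simp add: sum_product mult_single)
  then show ?thesis
    by (simp add: lookup_sum lookup_single when_def Emat_sum[symmetric] if_distrib cong: if_cong)
qed

theorem lemma2p2:
  fixes X :: "('k::{alg_closed_field, field_char_0} \<times> 'k \<times> 'k) set"
    and lam :: "nat \<Rightarrow> nat \<Rightarrow> nat \<Rightarrow> 'k"
    and d n :: nat
  assumes "d \<ge> 1" and "n \<ge> 1"
    and "proj_points X" and "card X = (d + 1) choose 2"
    and "generic_position X"
    and "ideal_gen (d + 1) (signed_minor d (linmat lam)) = ideal_of_points X"
  shows "mat_rank (Erows n d) (Ecols n d) (Emat lam) = ((n + 1) choose 2) * d"
proof -
  note hyp = assms(6)
  define R where "R = Erows n d"
  define C where "C = Ecols n d"
  define D where "D = {b. deg3 b = n - 1}"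
  define V where "V r = (\<lambda>x. if x \<in> C then Emat lam r x else 0)" for r
  have R_eq: "R = D \<times> {1..d}" unfolding R_def D_def Erows_def by auto
  have finD: "finite D" unfolding D_def by (rule finite_deg3)
  have finR: "finite R" unfolding R_eq using finD by simp
  have cardR: "card R = ((n + 1) choose 2) * d"
    unfolding R_eq D_def using card_deg3[of "n - 1"] assms(2) finite_deg3[of "n - 1"] by (simp add: card_cartesian_product)
  interpret vs: vector_space "(\<lambda>c (v::(nat \<times> nat \<times> nat) \<times> nat \<Rightarrow> 'k) x. c * v x)"
    by unfold_locales (auto simp: fun_eq_iff algebra_simps)
  obtain f0 where f0: "f0 \<in> ideal_of_points X" "f0 \<noteq> 0"
    using nonzero_in_ideal[of X] assms(3) unfolding proj_points_def by blast
  have key: "\<forall>r\<in>R. c r = 0" if sum0: "(\<Sum>r\<in>R. (\<lambda>x. c r * V r x)) = 0" for c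
  proof -
    have E0: "(\<Sum>r\<in>R. c r * Emat lam r x) = 0" if x: "x \<in> C" for x
    proof -
      have "(\<Sum>r\<in>R. (\<lambda>x. c r * V r x)) x = 0" using sum0 by simp
      then show ?thesis using x by (simp add: sum_fun_apply' V_def)
    qed
    define g where "g l = (\<Sum>\<beta>\<in>D. Poly_Mapping.single \<beta> (c (\<beta>, l)))" for l
    have lookup_g: "Poly_Mapping.lookup (g l) \<beta> = (if \<beta> \<in> D then c (\<beta>, l) else 0)" for l \<beta>
      unfolding g_def using finD by (simp add: lookup_sum lookup_single when_def)
    have P0: "(\<Sum>l=1..d. g l * linmat lam l j) = 0" if j: "j \<in> {1..d+1}" for j
    proof (rule poly_mapping_eqI)
      fix a
      have "Poly_Mapping.lookup (\<Sum>l=1..d. g l * linmat lam l j) a = (\<Sum>l=1..d. \<Sum>\<beta>\<in>D. c (\<beta>, l) * Emat lam (\<beta>, l) (a, j))"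
        unfolding g_def by (rule g_lin_lookup[OF finD])
      also have "\<dots> = (\<Sum>\<beta>\<in>D. \<Sum>l=1..d. c (\<beta>, l) * Emat lam (\<beta>, l) (a, j))"
        by (rule sum.swap)
      also have "\<dots> = (\<Sum>r\<in>R. c r * Emat lam r (a, j))"
        unfolding R_eq by (subst sum.cartesian_product) (simp add: case_prod_unfold)
      also have "\<dots> = 0"
      proof (cases "(a, j) \<in> C")
        case True then show ?thesis by (rule E0)
      next
        case False
        then have "deg3 a \<noteq> n" using j unfolding C_def Ecols_def by auto
        then have "Emat lam r (a, j) = 0" if "r \<in> R" for r
          using that assms(2) unfolding R_eq D_def Emat_def
          by (auto simp: deg3_evar split: prod.splits)
        then show ?thesis by simp
      qed
      finally show "Poly_Mapping.lookup (\<Sum>l=1..d. g l * linmat lam l j) a = Poly_Mapping.lookup 0 a" by simp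
    qed
    have gz: "g l = 0" if l: "l \<in> {1..d}" for l
    proof (rule ccontr)
      assume gl: "g l \<noteq> 0"
      have F0: "signed_minor d (linmat lam) j = 0" if j: "j \<in> {1..d+1}" for j
      proof -
        have "g l * detm d (\<lambda>l i. linmat lam l (skip j i)) = 0"
        proof (rule detm_combo[OF poly3_two l])
          fix i assume i: "i \<in> {1..d}"
          then have "skip j i \<in> {1..d+1}" using j by (auto simp: skip_def)
          then show "(\<Sum>la = 1..d. g la * linmat lam la (skip j i)) = 0" by (rule P0)
        qed
        then show ?thesis using gl by (simp add: signed_minor_def)
      qed
      have "ideal_gen (d + 1) (signed_minor d (linmat lam)) \<subseteq> {0}"
        unfolding ideal_gen_def using F0 by auto
      then show False using f0 hyp by auto
    qed
    show ?thesis
    proof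
      fix r assume "r \<in> R"
      then obtain \<beta> l where r: "r = (\<beta>, l)" "\<beta> \<in> D" "l \<in> {1..d}" unfolding R_eq by auto
      show "c r = 0" using lookup_g[of l \<beta>] gz[OF r(3)] r by simp
    qed
  qed
  have inj: "inj_on V R"
  proof
    fix r1 r2 assume r: "r1 \<in> R" "r2 \<in> R" "V r1 = V r2"
    show "r1 = r2"
    proof (rule ccontr)
      assume ne: "r1 \<noteq> r2"
      define c where "c r = (if r = r1 then 1 else if r = r2 then -1 else (0::'k))" for r
      have "(\<Sum>r\<in>R. (\<lambda>x. c r * V r x)) = (\<Sum>r\<in>{r1, r2}. (\<lambda>x. c r * V r x))"
        using r finR by (intro sum.mono_neutral_right) (auto simp: c_def fun_eq_iff)
      also have "\<dots> = 0" using ne r by (simp add: c_def fun_eq_iff)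
      finally have "c r1 = 0" using key r by blast
      then show False by (simp add: c_def)
    qed
  qed
  have indep: "vs.independent (V ` R)"
  proof (rule vs.independent_if_scalars_zero)
    show "finite (V ` R)" using finR by simp
    fix f v assume s: "(\<Sum>x\<in>V ` R. (\<lambda>y. f x * x y)) = 0" and v: "v \<in> V ` R"
    have "(\<Sum>r\<in>R. (\<lambda>y. f (V r) * V r y)) = 0"
      using s by (simp add: sum.reindex[OF inj])
    then have "\<forall>r\<in>R. f (V r) = 0" by (rule key)
    then show "f v = 0" using v by auto
  qed
  have "mat_rank R C (Emat lam) = vs.dim (V ` R)"
    unfolding mat_rank_def V_def by simp
  also have "\<dots> = card (V ` R)" by (rule vs.dim_eq_card_independent[OF indep])
  also have "\<dots> = card R" by (rule card_image[OF inj])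
  finally show ?thesis using cardR by (simp add: R_def C_def)
qed

end
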